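(* Let $r\ge6$ be a composite integer, written as $r=2^ep_z^{e_z}\cdots p_1^{e_1}$ with $e\ge0$, $z\ge0$, $p_1>\dots>p_z$ distinct odd primes and $e_j\ge1$. Let $q$ be a prime power, with $q\ge3$ if $r$ is even, and let $k\ge1$. Put $\ell_j=(p_j-3)/2$, $\Pi_j=\prod_{h=1}^jp_h^{e_h}$ ($\Pi_0=1$), and $$N_r(k,q)=\prod_{j=1}^{z}\prod_{i=1}^{e_j}\frac{q^{p_j^{i-1}\Pi_{j-1}k}\big(q^{(\ell_j+1)p_j^{i-1}\Pi_{j-1}k}-1\big)\big(q^{p_j^{i}\Pi_{j-1}k}-1\big)}{q^{p_j^{i-1}\Pi_{j-1}k}-1}\cdot\prod_{i=1}^{e}\left(\left\lfloor\frac{q-1}{2}\right\rfloor\frac{q^{2^i\Pi_zk}-1}{q-1}\right)$$ (empty products equal $1$), and $$S_3(rk,k,q)=q^k\,\frac{q^{(\ell+1)k}-1}{q^k-1}\,(q^{rk}-1),\qquad \ell=\left\lceil r/2\right\rceil-2.$$ Then $S_3(rk,k,q)/N_r(k,q)\to0$ as $k\to\infty$ with $q$ fixed, and also as $q\to\infty$ (over admissible prime powers) with $k$ fixed. If moreover $r$ is odd, write $r=2h+1$ and put $$S_4(rk,k,q)=h\left((q^k-1)^h(q^{rk}-1)+\frac{(q^k-1)^{h-1}(q^{rk}-1)}{q-1}\right),\qquad S_5(rk,k,q)=hq^k(q^k-1)^{h-1}(q^{rk}-1)+\frac{q^{rk}-1}{q^k-1};$$ then $S_4(rk,k,q)/N_r(k,q)\to0$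 and $S_5(rk,k,q)/N_r(k,q)\to0$ both as $k\to\infty$ with $q$ fixed and as $q\to\infty$ with $k$ fixed.
   Context: $N_r(k,q)$ is the cardinality of the paper's cyclic subspace codes in the Grassmannian of $k$-dimensional $\mathbb{F}_q$-subspaces of $\mathbb{F}_{q^{rk}}$ with minimum distance $2k-2$, and $S_3,S_4,S_5$ are the sizes of previously known codes with the same parameters; the statement is purely a comparison of these explicit functions. *)

theory Defs
  imports "HOL-Analysis.Analysis" "HOL-Number_Theory.Number_Theory"
begin

definition odd_primes_desc :: "nat \<Rightarrow> nat list" where
  "odd_primes_desc r = rev (sorted_list_of_set {p. prime p \<and> odd p \<and> p dvd r})"

definition zz :: "nat \<Rightarrow> nat" where
  "zz r = length (odd_primes_desc r)"

definition pj :: "nat \<Rightarrow> nat \<Rightarrow> nat" where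
  "pj r j = odd_primes_desc r ! (j - 1)"

definition ej :: "nat \<Rightarrow> nat \<Rightarrow> nat" where
  "ej r j = multiplicity (pj r j) r"

definition e2 :: "nat \<Rightarrow> nat" where
  "e2 r = multiplicity (2::nat) r"

definition Pij :: "nat \<Rightarrow> nat \<Rightarrow> nat" where
  "Pij r j = (\<Prod>h=1..j. pj r h ^ ej r h)"

definition lj :: "nat \<Rightarrow> nat \<Rightarrow> nat" where
  "lj r j = (pj r j - 3) div 2"

definition Nr :: "nat \<Rightarrow> nat \<Rightarrow> nat \<Rightarrow> real" where
  "Nr r k q =
    (\<Prod>j=1..zz r. \<Prod>i=1..ej r j.
        let a = pj r j ^ (i - 1) * Pij r (j - 1) * k in
        real q ^ a * (real q ^ ((lj r j + 1) * a) - 1)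
          * (real q ^ (pj r j ^ i * Pij r (j - 1) * k) - 1) / (real q ^ a - 1))
    * (\<Prod>i=1..e2 r. real ((q - 1) div 2)
          * ((real q ^ (2 ^ i * Pij r (zz r) * k) - 1) / (real q - 1)))"

definition S3 :: "nat \<Rightarrow> nat \<Rightarrow> nat \<Rightarrow> real" where
  "S3 r k q = (let l = nat (\<lceil>real r / 2\<rceil> - 2) in
     real q ^ k * (real q ^ ((l + 1) * k) - 1) / (real q ^ k - 1) * (real q ^ (r * k) - 1))"

definition S4 :: "nat \<Rightarrow> nat \<Rightarrow> nat \<Rightarrow> real" where
  "S4 r k q = (let h = (r - 1) div 2 in
     real h * ((real q ^ k - 1) ^ h * (real q ^ (r * k) - 1)
       + (real q ^ k - 1) ^ (h - 1) * (real q ^ (r * k) - 1) / (real q - 1)))"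

definition S5 :: "nat \<Rightarrow> nat \<Rightarrow> nat \<Rightarrow> real" where
  "S5 r k q = (let h = (r - 1) div 2 in
     real h * real q ^ k * (real q ^ k - 1) ^ (h - 1) * (real q ^ (r * k) - 1)
       + (real q ^ (r * k) - 1) / (real q ^ k - 1))"

definition admissible :: "nat \<Rightarrow> nat \<Rightarrow> bool" where
  "admissible r q \<longleftrightarrow> primepow q \<and> (even r \<longrightarrow> q \<ge> 3)"

end

theory Submission
  imports Defs
begin


lemma odd_prime_iff: assumes "prime (p::nat)" shows "odd p \<longleftrightarrow> p \<noteq> 2"
proof
  assume "odd p" then show "p \<noteq> 2" by auto
next
  assume "p \<noteq> 2"
  then have "p > 2" using assms using prime_ge_2_nat[of p] by linarith
  then show "odd p" using prime_odd_nat assms by blast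
qed

lemma setL: assumes "r > 0" shows "set (odd_primes_desc r) = {p. prime p \<and> odd p \<and> p dvd r}"
    "distinct (odd_primes_desc r)"
proof -
  have "finite {p. prime p \<and> odd p \<and> p dvd r}"
    by (rule finite_subset[of _ "{..r}"]) (auto intro: dvd_imp_le assms)
  then show "set (odd_primes_desc r) = {p. prime p \<and> odd p \<and> p dvd r}"
    "distinct (odd_primes_desc r)" by (simp_all add: odd_primes_desc_def)
qed

lemma odd3: "odd (p::nat) \<Longrightarrow> p \<ge> 3 \<Longrightarrow> 2 * ((p - 3) div 2 + 1) + 1 = p" by presburger

lemma pj_props: assumes "r > 0" "1 \<le> j" "j \<le> zz r"
  shows "prime (pj r j)" "odd (pj r j)" "pj r j dvd r" "pj r j \<ge> 3" "ej r j \<ge> 1"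
    "2 * (lj r j + 1) + 1 = pj r j"
proof -
  have "pj r j \<in> set (odd_primes_desc r)" unfolding pj_def
    using assms by (intro nth_mem) (auto simp: zz_def)
  then have *: "prime (pj r j)" "odd (pj r j)" "pj r j dvd r" using setL[OF assms(1)] by auto
  then show "prime (pj r j)" "odd (pj r j)" "pj r j dvd r" by auto
  have "pj r j \<ge> 2" using * prime_ge_2_nat by blast
  moreover have "pj r j \<noteq> 2" using *(2) by auto
  ultimately show g3: "pj r j \<ge> 3" by linarith
  have "multiplicity (pj r j) r > 0"
    using prime_multiplicity_gt_zero_iff[of "pj r j" r] *(1,3) assms(1) by (simp add: prime_imp_prime_elem)
  then show "ej r j \<ge> 1" unfolding ej_def by simp
  show "2 * (lj r j + 1) + 1 = pj r j" unfolding lj_def by (rule odd3[OF *(2) g3])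
qed

lemma Pij_Suc: "Pij r (Suc j) = Pij r j * pj r (Suc j) ^ ej r (Suc j)"
  unfolding Pij_def by simp

lemma Pij_pos: assumes "r > 0" "j \<le> zz r" shows "Pij r j \<ge> 1"
  unfolding Pij_def
proof (rule prod_ge_1)
  fix h assume "h \<in> {1..j}"
  then have "pj r h \<ge> 3" using pj_props(4)[of r h] assms by auto
  then show "1 \<le> pj r h ^ ej r h" by simp
qed

lemma factor: assumes "r > 0" shows "2 ^ e2 r * Pij r (zz r) = r"
proof -
  define L where "L = odd_primes_desc r"
  define g where "g p = p ^ multiplicity p r" for p :: nat
  have 1: "Pij r (zz r) = (\<Prod>h\<in>{1..zz r}. g (L ! (h - 1)))"
    unfolding Pij_def pj_def ej_def g_def L_def by simp
  have 2: "(\<Prod>h\<in>{1..zz r}. g (L ! (h - 1))) = (\<Prod>h<zz r. g (L ! h))"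
  proof -
    have "(\<Prod>h\<in>Suc ` {..<zz r}. g (L ! (h - 1))) = (\<Prod>h<zz r. g (L ! h))"
      by (subst prod.reindex) auto
    then show ?thesis by (simp only: image_Suc_lessThan)
  qed
  have dL: "distinct L" using setL(2)[OF assms] L_def by simp
  have inj: "inj_on ((!) L) {..<zz r}"
    by (rule inj_on_nth[OF dL]) (simp add: zz_def L_def)
  have 3: "(\<Prod>h<zz r. g (L ! h)) = (\<Prod>p\<in>(!) L ` {..<zz r}. g p)"
    by (simp add: prod.reindex[OF inj])
  have 4: "(!) L ` {..<zz r} = set L"
    unfolding zz_def L_def[symmetric] by (metis map_nth set_map set_upt lessThan_atLeast0)
  have 5: "set L = prime_factors r - {2}"
  proof -
    have "p \<in> set L \<longleftrightarrow> p \<in> prime_factors r - {2}" for p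
      using setL(1)[OF assms] odd_prime_iff[of p] in_prime_factors_iff[of p r] assms
      unfolding L_def by auto
    then show ?thesis by blast
  qed
  have P: "Pij r (zz r) = (\<Prod>p\<in>prime_factors r - {2}. g p)"
    using 1 2 3 4 5 by simp
  have R: "r = (\<Prod>p\<in>prime_factors r. g p)" unfolding g_def using prime_factorization_nat assms by blast
  show ?thesis
  proof (cases "2 \<in> prime_factors r")
    case True
    have "r = g 2 * (\<Prod>p\<in>prime_factors r - {2}. g p)"
      using R prod.remove[OF finite_set_mset True, of g] by simp
    then show ?thesis using P by (simp add: e2_def g_def)
  next
    case False
    then have "\<not> 2 dvd r" using assms in_prime_factors_iff[of 2 r] by simp
    then have "multiplicity 2 r = 0" by (rule not_dvd_imp_multiplicity_0)
    moreover have "prime_factors r - {2} = prime_factors r" using False by simp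
    ultimately show ?thesis using P R by (simp add: e2_def g_def)
  qed
qed

definition dd where "dd r j i = (lj r j + 1) * pj r j ^ (i - 1) * Pij r (j - 1) + pj r j ^ i * Pij r (j - 1)"
definition yy where "yy r j i = pj r j ^ (i - 1) * Pij r (j - 1)"
definition DN where "DN r = (\<Sum>j=1..zz r. \<Sum>i=1..ej r j. dd r j i) + (\<Sum>i=1..e2 r. 2 ^ i * Pij r (zz r))"

lemma perj: fixes m p P :: nat assumes "p = 2*m+1"
  shows "2*(\<Sum>i=1..e. m*p^(i-1)*P + p^i*P) + 3*P = 3*p^e*P + 2*(\<Sum>i=1..e. p^(i-1)*P)"
proof (induction e)
  case 0 then show ?case by simp
next
  case (Suc e)
  have key: "p * p^e * P = 2*m*p^e*P + p^e*P" using assms by (simp add: algebra_simps)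
  have "2*(\<Sum>i=1..Suc e. m*p^(i-1)*P + p^i*P) + 3*P
      = (2*(\<Sum>i=1..e. m*p^(i-1)*P + p^i*P) + 3*P) + 2*m*p^e*P + 2*(p*p^e*P)" by simp
  also have "\<dots> = 3*p^e*P + 2*(\<Sum>i=1..e. p^(i-1)*P) + 2*m*p^e*P + 2*(p*p^e*P)" using Suc.IH by simp
  also have "\<dots> = 3*(p*p^e*P) + 2*(\<Sum>i=1..e. p^(i-1)*P) + 2*(p^e*P)" using key by simp
  also have "\<dots> = 3*p^Suc e*P + 2*(\<Sum>i=1..Suc e. p^(i-1)*P)" by simp
  finally show ?case .
qed

lemma twosum: "(\<Sum>i=1..e. 2^i * (P::nat)) + 2*P = 2*2^e*P"
  by (induction e) simp_all

lemma oddsum: assumes "r > 0" shows "n \<le> zz r \<Longrightarrow>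
  2*(\<Sum>j=1..n. \<Sum>i=1..ej r j. dd r j i) + 3 = 3*Pij r n + 2*(\<Sum>j=1..n. \<Sum>i=1..ej r j. yy r j i)"
proof (induction n)
  case 0 then show ?case by (simp add: Pij_def)
next
  case (Suc n)
  have "2 * (lj r (Suc n) + 1) + 1 = pj r (Suc n)" using pj_props(6)[OF assms _ Suc.prems] by simp
  from perj[OF this[symmetric], where e="ej r (Suc n)" and P="Pij r n"]
  have "2 * (\<Sum>i=1..ej r (Suc n). dd r (Suc n) i) + 3 * Pij r n =
        3 * pj r (Suc n) ^ ej r (Suc n) * Pij r n + 2 * (\<Sum>i=1..ej r (Suc n). yy r (Suc n) i)"
    by (simp add: dd_def yy_def)
  then show ?case using Suc by (simp add: Pij_Suc algebra_simps)
qed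

lemma l_val: assumes "r \<ge> 4" shows "nat (\<lceil>real r / 2\<rceil> - 2) + 1 = (if odd r then (r - 1) div 2 else r div 2 - 1)"
proof (cases "odd r")
  case True
  then obtain m where m: "r = 2*m+1" using oddE by blast
  have "\<lceil>real r / 2\<rceil> = int m + 1" unfolding ceiling_eq_iff m by simp
  then show ?thesis using True m assms by simp
next
  case False
  then obtain m where m: "r = 2*m" by blast
  have "\<lceil>real r / 2\<rceil> = int m" unfolding ceiling_eq_iff m by simp
  then show ?thesis using False m assms by simp
qed

lemma comb: assumes "r \<ge> 6" "\<not> prime r"
  shows "DN r \<ge> nat (\<lceil>real r / 2\<rceil> - 2) + 1 + r + 1"
    "odd r \<Longrightarrow> DN r \<ge> (r - 1) div 2 + r + 1"
proof -
  have r0: "r > 0" using assms by simp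
  have F: "2 ^ e2 r * Pij r (zz r) = r" using factor[OF r0] .
  have O: "2*(\<Sum>j=1..zz r. \<Sum>i=1..ej r j. dd r j i) + 3 = 3*Pij r (zz r) + 2*(\<Sum>j=1..zz r. \<Sum>i=1..ej r j. yy r j i)"
    using oddsum[OF r0] by simp
  have T: "(\<Sum>i=1..e2 r. 2^i * Pij r (zz r)) + 2 * Pij r (zz r) = 2 * r"
    using twosum[where e="e2 r" and P="Pij r (zz r)"] F by (simp add: mult.assoc)
  have oddcase: "DN r \<ge> (r - 1) div 2 + r + 1" if "odd r"
  proof -
    have e0: "e2 r = 0" unfolding e2_def using that
      by (simp add: not_dvd_imp_multiplicity_0)
    hence Pr: "Pij r (zz r) = r" using F by simp
    let ?X = "\<Sum>j=1..zz r. \<Sum>i=1..ej r j. yy r j i"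
    have XE: "?X \<ge> (\<Sum>j=1..zz r. ej r j)"
    proof (rule sum_mono)
      fix j assume j: "j \<in> {1..zz r}"
      have "(\<Sum>i=1..ej r j. yy r j i) \<ge> (\<Sum>i=1..ej r j. 1)"
      proof (rule sum_mono)
        fix i
        have "pj r j ^ (i - 1) \<ge> 1" using pj_props(4)[OF r0, of j] j by simp
        moreover have "Pij r (j - 1) \<ge> 1" using Pij_pos[OF r0, of "j - 1"] j by (meson atLeastAtMost_iff diff_le_self le_trans)
        ultimately show "1 \<le> yy r j i" unfolding yy_def by (metis le_trans nat_mult_1 mult_le_mono)
      qed
      then show "ej r j \<le> (\<Sum>i=1..ej r j. yy r j i)" by simp
    qed
    have E2: "(\<Sum>j=1..zz r. ej r j) \<ge> 2"
    proof -
      consider "zz r = 0" | "zz r = 1" | "zz r \<ge> 2" by linarith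
      then show ?thesis
      proof cases
        case 1 then have "Pij r (zz r) = 1" by (simp add: Pij_def)
        then show ?thesis using Pr assms by simp
      next
        case 2
        then have r1: "r = pj r 1 ^ ej r 1" using Pr by (simp add: Pij_def)
        have "prime (pj r 1)" using pj_props(1)[OF r0, of 1] 2 by simp
        then have "ej r 1 \<noteq> 1" using r1 assms(2) by auto
        moreover have "ej r 1 \<ge> 1" using pj_props(5)[OF r0, of 1] 2 by simp
        ultimately show ?thesis using 2 by simp
      next
        case 3
        have "(\<Sum>j=1..zz r. ej r j) \<ge> (\<Sum>j=1..zz r. 1)"
          by (rule sum_mono) (use pj_props(5)[OF r0] in auto)
        then show ?thesis using 3 by simp
      qed
    qed
    have "DN r = (\<Sum>j=1..zz r. \<Sum>i=1..ej r j. dd r j i)" unfolding DN_def using e0 by simp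
    then show ?thesis using O XE E2 Pr that by (auto elim!: oddE)
  qed
  show "odd r \<Longrightarrow> DN r \<ge> (r - 1) div 2 + r + 1" using oddcase by blast
  show "DN r \<ge> nat (\<lceil>real r / 2\<rceil> - 2) + 1 + r + 1"
  proof (cases "odd r")
    case True
    then show ?thesis using oddcase l_val[of r] assms by simp
  next
    case False
    have "e2 r \<noteq> 0" unfolding e2_def using False r0
      by (metis even_iff_mod_2_eq_zero neq0_conv prime_multiplicity_gt_zero_iff two_is_prime_nat prime_imp_prime_elem dvd_imp_mod_0 not_gr0) 
    then have "(2::nat) ^ e2 r \<ge> 2" by (cases "e2 r") auto
    then have "2 * Pij r (zz r) \<le> r" using F by (metis mult_le_mono1)
    moreover have "DN r = (\<Sum>j=1..zz r. \<Sum>i=1..ej r j. dd r j i) + (\<Sum>i=1..e2 r. 2 ^ i * Pij r (zz r))"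
      by (simp add: DN_def)
    ultimately have "2 * DN r \<ge> 3 * r" using O T assms by linarith
    then show ?thesis using False l_val[of r] assms by (auto elim!: evenE)
  qed
qed



lemma F_low: fixes x :: real assumes "x \<ge> 2" "a \<ge> 1" "b \<ge> 1" "c \<ge> 1"
  shows "x^a*(x^b-1)*(x^c-1)/(x^a-1) \<ge> (1/4)*x^(b+c)"
proof -
  have ge: "x^n \<ge> 2" if "n \<ge> 1" for n
    using power_increasing[OF that, of x] assms(1) by simp
  have A: "x^a/(x^a-1) \<ge> 1" using ge[OF assms(2)] by simp
  have B: "x^b - 1 \<ge> x^b/2" using ge[OF assms(3)] by simp
  have C: "x^c - 1 \<ge> x^c/2" using ge[OF assms(4)] by simp
  have "(1/4)*x^(b+c) = 1 * ((x^b/2)*(x^c/2))" by (simp add: power_add)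
  also have "\<dots> \<le> (x^a/(x^a-1)) * ((x^b-1)*(x^c-1))"
    by (intro mult_mono A B C) (use assms(1) in auto)
  also have "\<dots> = x^a*(x^b-1)*(x^c-1)/(x^a-1)" by simp
  finally show ?thesis .
qed

lemma G_low: fixes q M :: nat assumes "q \<ge> 3" "M \<ge> 1"
  shows "real ((q - 1) div 2) * ((real q ^ M - 1) / (real q - 1)) \<ge> (1/4) * real q ^ M"
proof -
  have "4 * ((q - 1) div 2) \<ge> q" using assms(1) by presburger
  then have "real (4 * ((q - 1) div 2)) \<ge> real q" by (simp only: of_nat_le_iff)
  then have A: "real ((q - 1) div 2) \<ge> real q / 4" by simp
  have q1: "real q - 1 > 0" using assms by simp
  have pM: "real q ^ M = real q * real q ^ (M - 1)" using assms(2) by (cases M) auto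
  moreover have "real q ^ (M - 1) \<ge> 1" using assms by simp
  ultimately have "real q ^ M - 1 \<ge> real q ^ (M - 1) * (real q - 1)" by (simp add: algebra_simps)
  then have B: "(real q ^ M - 1) / (real q - 1) \<ge> real q ^ (M - 1)" using q1 by (simp add: field_simps)
  have "(1/4) * real q ^ M = (real q / 4) * real q ^ (M - 1)" by (simp add: pM)
  also have "\<dots> \<le> real ((q - 1) div 2) * ((real q ^ M - 1) / (real q - 1))"
    by (intro mult_mono A B) auto
  finally show ?thesis .
qed

definition cN :: "nat \<Rightarrow> real" where
  "cN r = (\<Prod>j=1..zz r. \<Prod>i=1..ej r j. (1/4::real)) * (\<Prod>i=1..e2 r. (1/4::real))"

lemma cN_pos: "cN r > 0" unfolding cN_def by (simp add: prod_pos)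

lemma N_low: assumes "r > 0" "admissible r q" "k \<ge> 1"
  shows "Nr r k q \<ge> cN r * real q ^ (k * DN r)"
proof -
  have q2: "q \<ge> 2" using assms(2) primepow_gt_Suc_0 unfolding admissible_def by fastforce
  let ?Q = "real q"
  have P1: "(\<Prod>j=1..zz r. \<Prod>i=1..ej r j.
        let a = pj r j ^ (i - 1) * Pij r (j - 1) * k in
        ?Q ^ a * (?Q ^ ((lj r j + 1) * a) - 1)
          * (?Q ^ (pj r j ^ i * Pij r (j - 1) * k) - 1) / (?Q ^ a - 1))
     \<ge> (\<Prod>j=1..zz r. \<Prod>i=1..ej r j. (1/4) * ?Q ^ (k * dd r j i))"
  proof (rule prod_mono, rule conjI)
    fix j assume j: "j \<in> {1..zz r}"
    have p3: "pj r j \<ge> 3" using pj_props(4)[OF assms(1)] j by auto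
    have P1: "Pij r (j - 1) \<ge> 1" using Pij_pos[OF assms(1), of "j - 1"] j by (meson atLeastAtMost_iff diff_le_self le_trans)
    show "0 \<le> (\<Prod>i=1..ej r j. (1/4) * ?Q ^ (k * dd r j i))" by (simp add: prod_nonneg)
    show "(\<Prod>i=1..ej r j. (1/4) * ?Q ^ (k * dd r j i)) \<le> (\<Prod>i=1..ej r j.
        let a = pj r j ^ (i - 1) * Pij r (j - 1) * k in
        ?Q ^ a * (?Q ^ ((lj r j + 1) * a) - 1)
          * (?Q ^ (pj r j ^ i * Pij r (j - 1) * k) - 1) / (?Q ^ a - 1))"
    proof (rule prod_mono, rule conjI)
      fix i
      let ?a = "pj r j ^ (i - 1) * Pij r (j - 1) * k"
      have a1: "?a \<ge> 1" using p3 P1 assms(3) by (simp add: Suc_le_eq)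
      have b1: "(lj r j + 1) * ?a \<ge> 1" using a1 by (simp add: Suc_le_eq)
      have c1: "pj r j ^ i * Pij r (j - 1) * k \<ge> 1" using p3 P1 assms(3) by (simp add: Suc_le_eq)
      have e: "(lj r j + 1) * ?a + pj r j ^ i * Pij r (j - 1) * k = k * dd r j i"
        unfolding dd_def by (simp add: algebra_simps)
      show "0 \<le> (1/4) * ?Q ^ (k * dd r j i)" by simp
      show "(1/4) * ?Q ^ (k * dd r j i) \<le> (let a = ?a in
        ?Q ^ a * (?Q ^ ((lj r j + 1) * a) - 1)
          * (?Q ^ (pj r j ^ i * Pij r (j - 1) * k) - 1) / (?Q ^ a - 1))"
        unfolding Let_def using F_low[of ?Q ?a "(lj r j + 1) * ?a" "pj r j ^ i * Pij r (j - 1) * k"] q2 a1 b1 c1 e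
        by simp
    qed
  qed
  have P2: "(\<Prod>i=1..e2 r. real ((q - 1) div 2) * ((?Q ^ (2 ^ i * Pij r (zz r) * k) - 1) / (?Q - 1)))
      \<ge> (\<Prod>i=1..e2 r. (1/4) * ?Q ^ (k * (2 ^ i * Pij r (zz r))))"
  proof (rule prod_mono, rule conjI)
    fix i assume i: "i \<in> {1..e2 r}"
    then have "e2 r \<noteq> 0" by auto
    then have "even r" unfolding e2_def by (metis not_dvd_imp_multiplicity_0)
    then have q3: "q \<ge> 3" using assms(2) unfolding admissible_def by blast
    have M1: "2 ^ i * Pij r (zz r) * k \<ge> 1" using Pij_pos[OF assms(1), of "zz r"] assms(3) by (simp add: Suc_le_eq)
    show "0 \<le> (1/4) * ?Q ^ (k * (2 ^ i * Pij r (zz r)))" by simp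
    show "(1/4) * ?Q ^ (k * (2 ^ i * Pij r (zz r))) \<le> real ((q - 1) div 2) * ((?Q ^ (2 ^ i * Pij r (zz r) * k) - 1) / (?Q - 1))"
      using G_low[OF q3 M1] by (simp add: mult.commute)
  qed
  have E1: "(\<Prod>j=1..zz r. \<Prod>i=1..ej r j. (1/4) * ?Q ^ (k * dd r j i))
     = (\<Prod>j=1..zz r. \<Prod>i=1..ej r j. (1/4::real)) * ?Q ^ (k * (\<Sum>j=1..zz r. \<Sum>i=1..ej r j. dd r j i))"
    by (simp only: prod.distrib power_sum sum_distrib_left)
  have E2: "(\<Prod>i=1..e2 r. (1/4) * ?Q ^ (k * (2 ^ i * Pij r (zz r))))
     = (\<Prod>i=1..e2 r. (1/4::real)) * ?Q ^ (k * (\<Sum>i=1..e2 r. 2 ^ i * Pij r (zz r)))"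
    by (simp only: prod.distrib power_sum sum_distrib_left)
  have eqc: "cN r * ?Q ^ (k * DN r) = ((\<Prod>j=1..zz r. \<Prod>i=1..ej r j. (1/4::real)) * ?Q ^ (k * (\<Sum>j=1..zz r. \<Sum>i=1..ej r j. dd r j i)))
     * ((\<Prod>i=1..e2 r. (1/4::real)) * ?Q ^ (k * (\<Sum>i=1..e2 r. 2 ^ i * Pij r (zz r))))"
    unfolding cN_def DN_def by (simp add: algebra_simps power_add)
  have L1: "0 \<le> (\<Prod>j=1..zz r. \<Prod>i=1..ej r j. (1/4) * ?Q ^ (k * dd r j i))" by (simp add: prod_nonneg)
  note N1 = order_trans[OF L1 P1]
  have L2: "0 \<le> (\<Prod>i=1..e2 r. (1/4) * ?Q ^ (k * (2 ^ i * Pij r (zz r))))" by (simp add: prod_nonneg)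
  have le: "((\<Prod>j=1..zz r. \<Prod>i=1..ej r j. (1/4::real)) * ?Q ^ (k * (\<Sum>j=1..zz r. \<Sum>i=1..ej r j. dd r j i)))
     * ((\<Prod>i=1..e2 r. (1/4::real)) * ?Q ^ (k * (\<Sum>i=1..e2 r. 2 ^ i * Pij r (zz r)))) \<le> Nr r k q"
    unfolding Nr_def E1[symmetric] E2[symmetric] by (rule mult_mono[OF P1 P2 N1 L2])
  show ?thesis unfolding eqc by (rule le)
qed



lemma div_le_self1: fixes a d :: real assumes "0 \<le> a" "1 \<le> d" shows "a / d \<le> a"
proof -
  have "a * 1 \<le> a * d" by (rule mult_left_mono) (use assms in auto)
  then show ?thesis using assms(2) by (simp add: pos_divide_le_eq)
qed

lemma S3_bound: fixes x :: real assumes "x \<ge> 2" "k \<ge> 1" "L \<ge> 1"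
  shows "0 \<le> x^k*(x^(L*k)-1)/(x^k-1)*(x^(r*k)-1) \<and> x^k*(x^(L*k)-1)/(x^k-1)*(x^(r*k)-1) \<le> 2 * x^(k*(L+r))"
proof -
  have xk: "x^k \<ge> 2" using power_increasing[OF assms(2), of x] assms(1) by simp
  have A0: "x^k/(x^k-1) \<ge> 0" using xk by simp
  have A: "x^k/(x^k-1) \<le> 2" using xk by (simp add: field_simps)
  have B0: "x^(L*k) - 1 \<ge> 0" using assms(1) by simp
  have C0: "x^(r*k) - 1 \<ge> 0" using assms(1) by simp
  have B: "x^(L*k) - 1 \<le> x^(L*k)" by simp
  have C: "x^(r*k) - 1 \<le> x^(r*k)" by simp
  have eq: "x^k*(x^(L*k)-1)/(x^k-1)*(x^(r*k)-1) = (x^k/(x^k-1)) * (x^(L*k)-1) * (x^(r*k)-1)" by simp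
  have "(x^k/(x^k-1)) * (x^(L*k)-1) * (x^(r*k)-1) \<le> 2 * x^(L*k) * x^(r*k)"
    by (intro mult_mono A B C) (use A0 B0 C0 assms(1) in auto)
  also have "\<dots> = 2 * x^(k*(L+r))" by (simp add: power_add algebra_simps flip: power_mult)
  finally have le: "(x^k/(x^k-1)) * (x^(L*k)-1) * (x^(r*k)-1) \<le> 2 * x^(k*(L+r))" .
  have nn: "0 \<le> (x^k/(x^k-1)) * (x^(L*k)-1) * (x^(r*k)-1)" by (intro mult_nonneg_nonneg A0 B0 C0)
  show ?thesis unfolding eq using nn le by blast
qed

lemma S4_bound: fixes x :: real assumes "x \<ge> 2" "k \<ge> 1" "h \<ge> 1"
  shows "0 \<le> real h * ((x^k-1)^h*(x^(r*k)-1) + (x^k-1)^(h-1)*(x^(r*k)-1)/(x-1))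
     \<and> real h * ((x^k-1)^h*(x^(r*k)-1) + (x^k-1)^(h-1)*(x^(r*k)-1)/(x-1)) \<le> (2 * real h) * x^(k*(h+r))"
proof -
  have xk: "x^k \<ge> 2" using power_increasing[OF assms(2), of x] assms(1) by simp
  define y where "y = x^k - 1"
  define z where "z = x^(r*k) - 1"
  have y0: "y \<ge> 1" "y \<le> x^k" using xk by (auto simp: y_def)
  have z0: "z \<ge> 0" "z \<le> x^(r*k)" using assms(1) by (auto simp: z_def)
  have yh: "y^h \<le> x^(k*h)" using power_mono[OF y0(2), of h] y0(1) by (simp add: power_mult)
  have yh1: "y^(h-1) \<le> x^(k*h)"
  proof -
    have "y^(h-1) \<le> (x^k)^(h-1)" using power_mono[OF y0(2), of "h-1"] y0(1) by simp
    also have "\<dots> \<le> (x^k)^h" using xk by (intro power_increasing) auto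
    finally show ?thesis by (simp add: power_mult)
  qed
  have x1: "x - 1 \<ge> 1" using assms by simp
  have yp: "y^(h-1) \<ge> 0" "y^h \<ge> 0" using y0 by auto
  have t2: "y^(h-1)*z/(x-1) \<le> y^(h-1)*z" using x1 yp z0
    by (intro div_le_self1) auto
  have t2': "y^(h-1)*z/(x-1) \<ge> 0" using x1 yp z0 by simp
  have "y^(h-1)*z \<le> x^(k*h) * x^(r*k)" by (intro mult_mono yh1 z0(2)) (use yp z0 assms(1) in auto)
  moreover have "y^h*z \<le> x^(k*h) * x^(r*k)" by (intro mult_mono yh z0(2)) (use yp z0 assms(1) in auto)
  moreover have "x^(k*h) * x^(r*k) = x^(k*(h+r))" by (simp add: power_add algebra_simps)
  ultimately have "y^h*z + y^(h-1)*z/(x-1) \<le> 2 * x^(k*(h+r))" using t2 by linarith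
  then have "real h * (y^h*z + y^(h-1)*z/(x-1)) \<le> real h * (2 * x^(k*(h+r)))"
    by (intro mult_left_mono) auto
  then have le': "real h * (y^h*z + y^(h-1)*z/(x-1)) \<le> (2 * real h) * x^(k*(h+r))" by (simp add: algebra_simps)
  have "y^h*z + y^(h-1)*z/(x-1) \<ge> 0" using t2' yp z0 by simp
  then have n2: "0 \<le> real h * (y^h*z + y^(h-1)*z/(x-1))" by simp
  show ?thesis unfolding y_def[symmetric] z_def[symmetric] using n2 le' by blast
qed

lemma S5_bound: fixes x :: real assumes "x \<ge> 2" "k \<ge> 1" "h \<ge> 1"
  shows "0 \<le> real h * x^k * (x^k-1)^(h-1) * (x^(r*k)-1) + (x^(r*k)-1)/(x^k-1)
     \<and> real h * x^k * (x^k-1)^(h-1) * (x^(r*k)-1) + (x^(r*k)-1)/(x^k-1) \<le> (real h + 1) * x^(k*(h+r))"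
proof -
  have xk: "x^k \<ge> 2" using power_increasing[OF assms(2), of x] assms(1) by simp
  define y where "y = x^k - 1"
  define z where "z = x^(r*k) - 1"
  have y0: "y \<ge> 1" "y \<le> x^k" using xk by (auto simp: y_def)
  have z0: "z \<ge> 0" "z \<le> x^(r*k)" using assms(1) by (auto simp: z_def)
  have yp: "y^(h-1) \<ge> 0" using y0 by auto
  have yh1: "x^k * y^(h-1) \<le> x^(k*h)"
  proof -
    have "y^(h-1) \<le> (x^k)^(h-1)" using power_mono[OF y0(2), of "h-1"] y0(1) by simp
    then have "x^k * y^(h-1) \<le> x^k * (x^k)^(h-1)" using xk by (intro mult_left_mono) auto
    also have "\<dots> = (x^k)^h" using assms(3) by (cases h) auto
    finally show ?thesis by (simp add: power_mult)
  qed
  have xx: "x^(k*h) * x^(r*k) = x^(k*(h+r))" by (simp add: power_add algebra_simps)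
  have "x^k * y^(h-1) * z \<le> x^(k*h) * x^(r*k)" by (intro mult_mono yh1 z0(2)) (use yp z0 xk assms(1) in auto)
  then have T1: "real h * (x^k * y^(h-1) * z) \<le> real h * x^(k*(h+r))" using xx by (intro mult_left_mono) auto
  have T2: "z / y \<le> x^(k*(h+r))"
  proof -
    have "z / y \<le> z" using y0 z0 by (intro div_le_self1) auto
    also have "\<dots> \<le> x^(r*k)" by (rule z0(2))
    also have "\<dots> \<le> x^(k*(h+r))" using assms(1) by (intro power_increasing) auto
    finally show ?thesis .
  qed
  have P: "0 \<le> real h * (x^k * y^(h-1) * z)" "0 \<le> z / y" using yp z0 y0 xk by auto
  show ?thesis unfolding y_def[symmetric] z_def[symmetric] using T1 T2 P
    by (simp add: algebra_simps)
qed

lemma ratio_bound: fixes S N C c x :: real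
  assumes "0 \<le> S" "S \<le> C * x^(k*DS)" "N \<ge> c * x^(k*D)" "c > 0" "D \<ge> DS + 1" "x \<ge> 1"
  shows "\<bar>S / N\<bar> \<le> (C / c) / x^k"
proof -
  have xp: "x^(k*DS) > 0" "x^k > 0" using assms(6) by auto
  have "0 \<le> C * x^(k*DS)" using assms(1,2) by linarith
  then have C0: "C \<ge> 0" using xp by (simp add: zero_le_mult_iff)
  have "k*(DS+1) \<le> k*D" using assms(5) by (rule mult_le_mono2)
  then have "x^(k*D) \<ge> x^(k*(DS+1))" using assms(6) by (intro power_increasing) auto
  then have XD: "x^(k*D) \<ge> x^(k*DS) * x^k" by (simp add: power_add algebra_simps)
  have "c * (x^(k*DS) * x^k) \<le> c * x^(k*D)" using assms(4) XD by (intro mult_left_mono) auto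
  then have N0: "N \<ge> c * (x^(k*DS) * x^k)" using assms(3) by linarith
  have Np: "c * (x^(k*DS) * x^k) > 0" using assms(4) xp by simp
  have "\<bar>S / N\<bar> = S / N" using assms(1) N0 Np by simp
  also have "\<dots> \<le> S / (c * (x^(k*DS) * x^k))" using assms(1) N0 Np by (intro divide_left_mono) auto
  also have "\<dots> \<le> (C * x^(k*DS)) / (c * (x^(k*DS) * x^k))" using assms(2) Np by (intro divide_right_mono) auto
  also have "\<dots> = (C / c) / x^k" using xp assms(4) by (simp add: field_simps)
  finally show ?thesis .
qed

lemma main_lim:
  fixes S :: "nat \<Rightarrow> nat \<Rightarrow> real"
  assumes r0: "r > 0"
    and SB: "\<And>k q. k \<ge> 1 \<Longrightarrow> admissible r q \<Longrightarrow> 0 \<le> S k q \<and> S k q \<le> C * real q ^ (k*DS)"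
    and D: "DN r \<ge> DS + 1"
  shows "\<forall>q. admissible r q \<longrightarrow> ((\<lambda>k. S k q / Nr r k q) \<longlongrightarrow> 0) sequentially"
    "\<forall>k\<ge>1. ((\<lambda>q. S k q / Nr r k q) \<longlongrightarrow> 0) (inf at_top (principal {q. admissible r q}))"
proof -
  have q2: "real q \<ge> 2" if "admissible r q" for q
    using that primepow_gt_Suc_0 unfolding admissible_def by fastforce
  have RB: "\<bar>S k q / Nr r k q\<bar> \<le> (C / cN r) / real q ^ k" if "k \<ge> 1" "admissible r q" for k q
    using SB[OF that] N_low[OF r0 that(2,1)] cN_pos[of r] D q2[OF that(2)]
    by (intro ratio_bound[where DS=DS and D="DN r"]) auto
  have C0: "C \<ge> 0" if "admissible r q" for q
  proof -
    have N: "0 \<le> C * real q ^ (1*DS)" using SB[OF _ that, of 1] by auto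
    have P: "real q ^ (1*DS) > 0" using q2[OF that] by simp
    show ?thesis
    proof (rule ccontr)
      assume "\<not> 0 \<le> C"
      then have "C < 0" by simp
      then have "C * real q ^ (1*DS) < 0" using P by (rule mult_neg_pos)
      then show False using N by simp
    qed
  qed
  show "\<forall>q. admissible r q \<longrightarrow> ((\<lambda>k. S k q / Nr r k q) \<longlongrightarrow> 0) sequentially"
  proof (intro allI impI)
    fix q assume q: "admissible r q"
    have lim: "(\<lambda>k. (C / cN r) * (1 / real q) ^ k) \<longlonglongrightarrow> 0"
      by (intro tendsto_mult_right_zero LIMSEQ_power_zero) (use q2[OF q] in simp)
    show "((\<lambda>k. S k q / Nr r k q) \<longlongrightarrow> 0) sequentially"
    proof (rule Lim_null_comparison[OF _ lim])
      show "\<forall>\<^sub>F k in sequentially. norm (S k q / Nr r k q) \<le> C / cN r * (1 / real q) ^ k"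
        unfolding eventually_sequentially
        using RB[OF _ q] by (intro exI[of _ 1]) (simp add: power_one_over)
    qed
  qed
  show "\<forall>k\<ge>1. ((\<lambda>q. S k q / Nr r k q) \<longlongrightarrow> 0) (inf at_top (principal {q. admissible r q}))"
  proof (intro allI impI)
    fix k :: nat assume k: "k \<ge> 1"
    have lim0: "((\<lambda>q. (C / cN r) / real q) \<longlongrightarrow> 0) at_top"
      by (intro tendsto_divide_0[OF tendsto_const] filterlim_at_top_imp_at_infinity filterlim_real_sequentially)
    have lim: "((\<lambda>q. (C / cN r) / real q) \<longlongrightarrow> 0) (inf at_top (principal {q. admissible r q}))"
      by (rule tendsto_mono[OF inf_le1 lim0])
    show "((\<lambda>q. S k q / Nr r k q) \<longlongrightarrow> 0) (inf at_top (principal {q. admissible r q}))"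
    proof (rule Lim_null_comparison[OF _ lim])
      show "\<forall>\<^sub>F q in inf at_top (principal {q. admissible r q}). norm (S k q / Nr r k q) \<le> C / cN r / real q"
        unfolding eventually_inf_principal
      proof (intro always_eventually allI impI)
        fix q assume q: "q \<in> {q. admissible r q}"
        then have qa: "admissible r q" by simp
        have "real q \<le> real q ^ k" using q2[OF qa] k power_increasing[OF k, of "real q"] by simp
        then have "(C / cN r) / real q ^ k \<le> (C / cN r) / real q"
          using C0[OF qa] cN_pos[of r] q2[OF qa] by (intro divide_left_mono) auto
        then show "norm (S k q / Nr r k q) \<le> C / cN r / real q" using RB[OF k qa] by simp
      qed
    qed
  qed
qed



theorem theorem4p1:
  fixes r :: nat
  assumes "r \<ge> 6" and "\<not> prime r"
  shows "(\<forall>q. admissible r q \<longrightarrow> ((\<lambda>k. S3 r k q / Nr r k q) \<longlongrightarrow> 0) sequentially)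
       \<and> (\<forall>k\<ge>1. ((\<lambda>q. S3 r k q / Nr r k q) \<longlongrightarrow> 0)
              (inf at_top (principal {q. admissible r q})))
       \<and> (odd r \<longrightarrow>
           (\<forall>q. admissible r q \<longrightarrow> ((\<lambda>k. S4 r k q / Nr r k q) \<longlongrightarrow> 0) sequentially)
         \<and> (\<forall>k\<ge>1. ((\<lambda>q. S4 r k q / Nr r k q) \<longlongrightarrow> 0)
              (inf at_top (principal {q. admissible r q})))
         \<and> (\<forall>q. admissible r q \<longrightarrow> ((\<lambda>k. S5 r k q / Nr r k q) \<longlongrightarrow> 0) sequentially)
         \<and> (\<forall>k\<ge>1. ((\<lambda>q. S5 r k q / Nr r k q) \<longlongrightarrow> 0)
              (inf at_top (principal {q. admissible r q}))))"
proof -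
  have r0: "r > 0" using assms by simp
  have q2: "real q \<ge> 2" if "admissible r q" for q
    using that primepow_gt_Suc_0 unfolding admissible_def by fastforce
  define L where "L = nat (\<lceil>real r / 2\<rceil> - 2) + 1"
  have L1: "L \<ge> 1" by (simp add: L_def)
  have S3B: "0 \<le> S3 r k q \<and> S3 r k q \<le> 2 * real q ^ (k*(L+r))" if "k \<ge> 1" "admissible r q" for k q
    using S3_bound[OF q2[OF that(2)] that(1) L1, of r] unfolding S3_def Let_def L_def by simp
  have D3: "DN r \<ge> (L + r) + 1" using comb(1)[OF assms] unfolding L_def by simp
  note M3 = main_lim[where S="\<lambda>k q. S3 r k q", OF r0 S3B D3]
  have odd_part: "(\<forall>q. admissible r q \<longrightarrow> ((\<lambda>k. S4 r k q / Nr r k q) \<longlongrightarrow> 0) sequentially)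
         \<and> (\<forall>k\<ge>1. ((\<lambda>q. S4 r k q / Nr r k q) \<longlongrightarrow> 0)
              (inf at_top (principal {q. admissible r q})))
         \<and> (\<forall>q. admissible r q \<longrightarrow> ((\<lambda>k. S5 r k q / Nr r k q) \<longlongrightarrow> 0) sequentially)
         \<and> (\<forall>k\<ge>1. ((\<lambda>q. S5 r k q / Nr r k q) \<longlongrightarrow> 0)
              (inf at_top (principal {q. admissible r q})))" if od: "odd r"
  proof -
    define h where "h = (r - 1) div 2"
    have h1: "h \<ge> 1" using assms(1) unfolding h_def by simp
    have S4B: "0 \<le> S4 r k q \<and> S4 r k q \<le> (2 * real h) * real q ^ (k*(h+r))" if "k \<ge> 1" "admissible r q" for k q
      using S4_bound[OF q2[OF that(2)] that(1) h1, of r] unfolding S4_def Let_def h_def by simp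
    have S5B: "0 \<le> S5 r k q \<and> S5 r k q \<le> (real h + 1) * real q ^ (k*(h+r))" if "k \<ge> 1" "admissible r q" for k q
      using S5_bound[OF q2[OF that(2)] that(1) h1, of r] unfolding S5_def Let_def h_def by simp
    have D4: "DN r \<ge> (h + r) + 1" using comb(2)[OF assms od] unfolding h_def by simp
    note M4 = main_lim[where S="\<lambda>k q. S4 r k q", OF r0 S4B D4]
    note M5 = main_lim[where S="\<lambda>k q. S5 r k q", OF r0 S5B D4]
    show ?thesis using M4 M5 by simp
  qed
  show ?thesis using M3 odd_part by simp
qed

end
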